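(* Let $V\in\mathbb R^{n\times n}$ be orthogonal with $\|V-I\|_2<r<1$. Then \[\|\log_m(V)\|_2<r\,\frac{\sqrt{1-r^2/4}}{1-r^2/2}.\]
   Context: $\|\cdot\|_2$ is the spectral norm and $\log_m$ the principal matrix logarithm. *)

theory Defs
  imports "HOL-Analysis.Analysis"
begin

definition spec_norm :: "real^'n^'n \<Rightarrow> real" where
  "spec_norm A = onorm (\<lambda>x. A *v x)"

primrec mat_pow :: "real^'n^'n \<Rightarrow> nat \<Rightarrow> real^'n^'n" where
  "mat_pow A 0 = mat 1"
| "mat_pow A (Suc k) = A ** mat_pow A k"

definition mat_exp :: "real^'n^'n \<Rightarrow> real^'n^'n" where
  "mat_exp A = (\<Sum>k. (1 / fact k) *\<^sub>R mat_pow A k)"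

definition cplx_eigenvalue :: "real^'n^'n \<Rightarrow> complex \<Rightarrow> bool" where
  "cplx_eigenvalue A l \<longleftrightarrow>
     (\<exists>v::complex^'n. v \<noteq> 0 \<and> map_matrix complex_of_real A *v v = l *s v)"

definition principal_log :: "real^'n^'n \<Rightarrow> real^'n^'n" where
  "principal_log V = (THE X. mat_exp X = V \<and>
      (\<forall>l. cplx_eigenvalue X l \<longrightarrow> - pi < Im l \<and> Im l < pi))"

end

theory Submission
  imports Defs "HOL-Computational_Algebra.Fundamental_Theorem_Algebra"
begin

lemma matrix_add_rdistrib': "((B + C) ** A) = (B ** A) + (C ** A)"
  by (simp add: matrix_matrix_mult_def vec_eq_iff sum.distrib algebra_simps)

lemma scaleR_mm_l: "((r::real) *\<^sub>R A) ** B = r *\<^sub>R (A ** (B::real^'n^'m))"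
  by (simp add: matrix_matrix_mult_def vec_eq_iff sum_distrib_left algebra_simps)
lemma scaleR_mm_r: "A ** ((r::real) *\<^sub>R B) = r *\<^sub>R (A ** (B::real^'n^'m))"
  by (simp add: matrix_matrix_mult_def vec_eq_iff sum_distrib_left algebra_simps)

typedef (overloaded) 'n rm = "UNIV :: (real^'n^'n) set"
  morphisms mr rmat by auto

setup_lifting type_definition_rm

instantiation rm :: (finite) real_normed_algebra_1
begin

lift_definition zero_rm :: "'a rm" is "0" .
lift_definition one_rm :: "'a rm" is "mat 1" .
lift_definition plus_rm :: "'a rm \<Rightarrow> 'a rm \<Rightarrow> 'a rm" is "(+)" .
lift_definition minus_rm :: "'a rm \<Rightarrow> 'a rm \<Rightarrow> 'a rm" is "(-)" .
lift_definition uminus_rm :: "'a rm \<Rightarrow> 'a rm" is "uminus" .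
lift_definition times_rm :: "'a rm \<Rightarrow> 'a rm \<Rightarrow> 'a rm" is "(**)" .
lift_definition scaleR_rm :: "real \<Rightarrow> 'a rm \<Rightarrow> 'a rm" is "scaleR" .
lift_definition norm_rm :: "'a rm \<Rightarrow> real" is "\<lambda>A. onorm ((*v) A)" .

definition dist_rm :: "'a rm \<Rightarrow> 'a rm \<Rightarrow> real"
  where "dist_rm a b = norm (a - b)"

definition [code del]:
  "(uniformity :: ('a rm \<times> 'a rm) filter) = (INF e\<in>{0 <..}. principal {(x, y). dist x y < e})"

definition open_rm :: "'a rm set \<Rightarrow> bool"
  where [code del]: "open_rm S = (\<forall>x\<in>S. \<forall>\<^sub>F (x', y) in uniformity. x' = x \<longrightarrow> y \<in> S)"

definition sgn_rm :: "'a rm \<Rightarrow> 'a rm"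
  where "sgn_rm x = scaleR (inverse (norm x)) x"

lemma mv_add: "(A + B) *v x = A *v x + B *v (x::real^'n)"
  by (simp add: matrix_vector_mult_add_rdistrib)

instance
proof
  fix a b c :: "'a rm" and r s :: real
  show "a + b + c = a + (b + c)" by transfer (simp add: algebra_simps)
  show "a + b = b + a" by transfer (simp add: algebra_simps)
  show "0 + a = a" by transfer simp
  show "- a + a = 0" by transfer simp
  show "a - b = a + - b" by transfer simp
  show "r *\<^sub>R (a + b) = r *\<^sub>R a + r *\<^sub>R b" by transfer (simp add: algebra_simps)
  show "(r + s) *\<^sub>R a = r *\<^sub>R a + s *\<^sub>R a" by transfer (simp add: algebra_simps)
  show "r *\<^sub>R s *\<^sub>R a = (r * s) *\<^sub>R a" by transfer simp
  show "1 *\<^sub>R a = a" by transfer simp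
  show "a * b * c = a * (b * c)" by transfer (simp add: matrix_mul_assoc)
  show "(a + b) * c = a * c + b * c" by transfer (simp add: matrix_add_rdistrib')
  show "a * (b + c) = a * b + a * c" by transfer (simp add: matrix_add_ldistrib)
  show "r *\<^sub>R a * b = r *\<^sub>R (a * b)" by transfer (simp add: scaleR_mm_l)
  show "a * r *\<^sub>R b = r *\<^sub>R (a * b)" by transfer (simp add: scaleR_mm_r)
  show "1 * a = a" by transfer simp
  show "a * 1 = a" by transfer simp
  show "(0::'a rm) \<noteq> 1" apply transfer by (auto simp: vec_eq_iff mat_def)
  show "dist a b = norm (a - b)" by (simp add: dist_rm_def)
  show "sgn a = inverse (norm a) *\<^sub>R a" by (simp add: sgn_rm_def)
  show "(uniformity :: ('a rm \<times> 'a rm) filter) = (INF e\<in>{0 <..}. principal {(x, y). dist x y < e})"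
    by (simp add: uniformity_rm_def)
  fix U :: "'a rm set"
  show "open U = (\<forall>x\<in>U. \<forall>\<^sub>F (x', y) in uniformity. x' = x \<longrightarrow> y \<in> U)"
    by (simp add: open_rm_def)
  show "(norm a = 0) = (a = 0)"
    apply transfer
    by (simp add: onorm_eq_0 matrix_vector_mul_bounded_linear) (metis matrix_eq matrix_vector_mult_0)
  show "norm (a + b) \<le> norm a + norm b"
  proof transfer
    fix a b :: "real^'a^'a"
    have e: "(*v) (a + b) = (\<lambda>x. a *v x + b *v x)" by (rule ext) (simp add: mv_add)
    show "onorm ((*v) (a + b)) \<le> onorm ((*v) a) + onorm ((*v) b)"
      unfolding e by (rule onorm_triangle) auto
  qed
  show "norm (r *\<^sub>R a) = \<bar>r\<bar> * norm a"
  proof transfer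
    fix a :: "real^'a^'a" and r
    have e: "(*v) (r *\<^sub>R a) = (\<lambda>x. r *\<^sub>R (a *v x))" by (rule ext) (simp add: scaleR_matrix_vector_assoc)
    show "onorm ((*v) (r *\<^sub>R a)) = \<bar>r\<bar> * onorm ((*v) a)"
      unfolding e by (rule onorm_scaleR) auto
  qed
  show "norm (a * b) \<le> norm a * norm b"
  proof transfer
    fix a b :: "real^'a^'a"
    have e: "(*v) (a ** b) = (*v) a \<circ> (*v) b" by (rule ext) (simp add: matrix_vector_mul_assoc)
    show "onorm ((*v) (a ** b)) \<le> onorm ((*v) a) * onorm ((*v) b)"
      unfolding e by (rule onorm_compose) auto
  qed
  show "norm (1::'a rm) = 1"
  proof transfer
    have e: "(*v) (mat 1 :: real^'a^'a) = (\<lambda>x. x)" by (rule ext) simp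
    show "onorm ((*v) (mat 1 :: real^'a^'a)) = 1" unfolding e by (rule onorm_id)
  qed
qed
end

lemma norm_mat_le_sum: "norm (M::real^'n^'m) \<le> (\<Sum>i\<in>UNIV. \<Sum>j\<in>UNIV. \<bar>M$i$j\<bar>)"
proof -
  have "norm M \<le> (\<Sum>i\<in>UNIV. norm (M$i))" by (simp add: norm_vec_def L2_set_le_sum)
  also have "\<dots> \<le> (\<Sum>i\<in>UNIV. \<Sum>j\<in>UNIV. \<bar>M$i$j\<bar>)" by (rule sum_mono) (rule norm_le_l1_cart)
  finally show ?thesis .
qed

lemma norm_mr_le: "norm (mr A) \<le> real CARD('n) * real CARD('n) * norm (A::'n::finite rm)"
proof -
  have "norm (mr A) \<le> (\<Sum>i\<in>UNIV. \<Sum>j\<in>UNIV. \<bar>mr A$i$j\<bar>)" by (rule norm_mat_le_sum)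
  also have "\<dots> \<le> (\<Sum>i\<in>(UNIV::'n set). \<Sum>j\<in>(UNIV::'n set). norm A)"
    by (intro sum_mono) (simp add: norm_rm.rep_eq matrix_component_le_onorm)
  finally show ?thesis by simp
qed

lemma norm_le_mr: "norm (A::'n::finite rm) \<le> real CARD('n) * real CARD('n) * norm (mr A)"
proof -
  have "norm A \<le> (\<Sum>i\<in>UNIV. \<Sum>j\<in>UNIV. \<bar>mr A$i$j\<bar>)"
    by (simp add: norm_rm.rep_eq onorm_le_matrix_component_sum)
  also have "\<dots> \<le> (\<Sum>i\<in>(UNIV::'n set). \<Sum>j\<in>(UNIV::'n set). norm (mr A))"
    proof (intro sum_mono) 
    fix i j show "\<bar>mr A $ i $ j\<bar> \<le> norm (mr A)"
      using component_le_norm_cart[of "mr A $ i" j] Finite_Cartesian_Product.norm_nth_le[of "mr A" i] by linarith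
  qed
  finally show ?thesis by simp
qed

lemma mr_diff: "mr (a - b) = mr a - mr b" by transfer simp
lemma rmat_diff: "rmat (a - b) = rmat a - rmat b" by (simp add: minus_rm_def rmat_inverse)

instance rm :: (finite) banach
proof
  fix X :: "nat \<Rightarrow> 'a rm"
  assume C: "Cauchy X"
  define K where "K = real CARD('a) * real CARD('a)"
  have K: "K > 0" unfolding K_def by simp
  have "Cauchy (\<lambda>k. mr (X k))"
  proof (rule metric_CauchyI)
    fix e :: real assume e: "e > 0"
    then obtain M where M: "\<forall>m\<ge>M. \<forall>n\<ge>M. dist (X m) (X n) < e / K"
      using metric_CauchyD[OF C, of "e/K"] K by auto
    show "\<exists>M. \<forall>m\<ge>M. \<forall>n\<ge>M. dist (mr (X m)) (mr (X n)) < e"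
    proof (intro exI allI impI)
      fix m n assume "m \<ge> M" "n \<ge> M"
      then have "norm (X m - X n) < e / K" using M by (simp add: dist_norm)
      then have "K * norm (X m - X n) < e" using K by (simp add: field_simps)
      moreover have "norm (mr (X m - X n)) \<le> K * norm (X m - X n)" unfolding K_def by (rule norm_mr_le)
      ultimately show "dist (mr (X m)) (mr (X n)) < e" by (simp add: dist_norm mr_diff)
    qed
  qed
  then obtain L where L: "(\<lambda>k. mr (X k)) \<longlonglongrightarrow> L" using Cauchy_convergent_iff convergent_def by blast
  have "(\<lambda>k. X k - rmat L) \<longlonglongrightarrow> 0"
  proof (rule Lim_null_comparison)
    show "\<forall>\<^sub>F k in sequentially. norm (X k - rmat L) \<le> K * norm (mr (X k) - L)"
    proof (rule always_eventually, rule allI)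
      fix k
      have e: "mr (X k - rmat L) = mr (X k) - L" by (simp add: mr_diff rmat_inverse)
      show "norm (X k - rmat L) \<le> K * norm (mr (X k) - L)"
        using norm_le_mr[of "X k - rmat L"] unfolding e K_def .
    qed
    have "(\<lambda>k. mr (X k) - L) \<longlonglongrightarrow> 0" using L by (rule LIM_zero)
    then show "(\<lambda>k. K * norm (mr (X k) - L)) \<longlonglongrightarrow> 0"
      by (metis mult_zero_right tendsto_mult_left tendsto_norm_zero)
  qed
  then have "X \<longlonglongrightarrow> rmat L" by (simp add: LIM_zero_iff)
  then show "convergent X" by (auto simp: convergent_def)
qed

lemma mr_mult: "mr (a * b) = mr a ** mr b" by transfer simp
lemma mr_one: "mr 1 = mat 1" by transfer simp
lemma mr_add: "mr (a + b) = mr a + mr b" by transfer simp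
lemma mr_uminus: "mr (- a) = - mr a" by transfer simp
lemma mr_scaleR: "mr (r *\<^sub>R a) = r *\<^sub>R mr a" by transfer simp
lemma mr_zero: "mr 0 = 0" by transfer simp
lemma mr_power: "mr (a ^ k) = mat_pow (mr a) k"
  by (induct k) (simp_all add: mr_one mr_mult)
lemma mr_rmat: "mr (rmat A) = A" by (simp add: rmat_inverse)
lemma mr_inj: "mr a = mr b \<Longrightarrow> a = b" by (simp add: mr_inject)

lemma bounded_linear_mr: "bounded_linear (mr :: 'n::finite rm \<Rightarrow> _)"
proof
  fix a b :: "'n rm" and r
  show "mr (a + b) = mr a + mr b" by (rule mr_add)
  show "mr (r *\<^sub>R a) = r *\<^sub>R mr a" by (rule mr_scaleR)
  show "\<exists>K. \<forall>x::'n rm. norm (mr x) \<le> norm x * K"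
    using norm_mr_le by (metis mult.commute)
qed

lemma mr_sums:
  assumes "(\<lambda>n. c n *\<^sub>R x ^ n) sums s"
  shows "(\<lambda>n. c n *\<^sub>R mat_pow (mr x) n) sums mr (s::'n::finite rm)"
  using bounded_linear.sums[OF bounded_linear_mr assms] by (simp add: mr_scaleR mr_power)

lemma mat_exp_sums: "(\<lambda>n. (1 / fact n) *\<^sub>R mat_pow X n) sums mr (exp (rmat X))"
proof -
  have "(\<lambda>n. (1 / fact n) *\<^sub>R (rmat X) ^ n) sums exp (rmat X)"
    using exp_converges[of "rmat X"] by (simp add: divide_inverse_commute)
  from mr_sums[OF this] show ?thesis by (simp add: mr_rmat)
qed

lemma mat_exp_eq: "mat_exp X = mr (exp (rmat X))"
  unfolding mat_exp_def using mat_exp_sums sums_unique by metis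

lemma mat_exp_add:
  assumes "A ** B = B ** A"
  shows "mat_exp (A + B) = mat_exp A ** mat_exp B"
proof -
  have "rmat A * rmat B = rmat B * rmat A"
    by (rule mr_inj) (simp add: mr_mult mr_rmat assms)
  then have "exp (rmat A + rmat B) = exp (rmat A) * exp (rmat B)" by (rule exp_add_commuting)
  moreover have "rmat (A + B) = rmat A + rmat B" by (rule mr_inj) (simp add: mr_add mr_rmat)
  ultimately show ?thesis by (simp add: mat_exp_eq mr_mult)
qed

lemma mat_exp_minus: "mat_exp (- A) ** mat_exp A = mat 1"
proof -
  have "rmat (- A) = - rmat A" by (rule mr_inj) (simp add: mr_uminus mr_rmat)
  have "exp (rmat (- A)) * exp (rmat A) = 1"
    unfolding \<open>rmat (- A) = - rmat A\<close> using exp_minus_inverse[of "- rmat A"] by simp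
  then have "mr (exp (rmat (- A)) * exp (rmat A)) = mat 1" by (simp add: mr_one)
  then show ?thesis by (simp add: mat_exp_eq mr_mult)
qed

lemma commute_suminf:
  fixes a :: "'a::{real_normed_algebra_1, banach}"
  assumes "summable f" "\<And>n. a * f n = f n * a"
  shows "a * suminf f = suminf f * a"
  using suminf_mult[OF assms(1), of a] suminf_mult2[OF assms(1), of a] assms(2) by simp

lemma mat_exp_commute:
  assumes "A ** Y = Y ** A"
  shows "A ** mat_exp Y = mat_exp Y ** A"
proof -
  have c: "rmat A * rmat Y = rmat Y * rmat A"
    by (rule mr_inj) (simp add: mr_mult mr_rmat assms)
  have "rmat A * exp (rmat Y) = exp (rmat Y) * rmat A"
    unfolding exp_def
  proof (rule commute_suminf)
    show "summable (\<lambda>n. rmat Y ^ n /\<^sub>R fact n)" by (rule summable_exp_generic)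
    fix n show "rmat A * (rmat Y ^ n /\<^sub>R fact n) = (rmat Y ^ n /\<^sub>R fact n) * rmat A"
      using power_commuting_commutes[OF c[symmetric], of n]
      by (simp only: mult_scaleR_right mult_scaleR_left)
  qed
  then have "mr (rmat A * exp (rmat Y)) = mr (exp (rmat Y) * rmat A)" by simp
  then show ?thesis by (simp add: mat_exp_eq mr_mult mr_rmat)
qed

lemma mat_exp_self_commute: "A ** mat_exp A = mat_exp A ** A"
  by (rule mat_exp_commute) simp

definition phi_rm :: "'a::{real_normed_algebra_1,banach} \<Rightarrow> 'a" where
  "phi_rm x = (\<Sum>n. (1 / fact (Suc n)) *\<^sub>R x ^ n)"

lemma summable_phi: "summable (\<lambda>n. (1 / fact (Suc n)) *\<^sub>R (x::'a::{real_normed_algebra_1,banach}) ^ n)"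
proof (rule summable_comparison_test')
  show "summable (\<lambda>n. norm x ^ n /\<^sub>R fact n)" using summable_exp_generic[of "norm x"] by simp
  fix n :: nat
  have "norm ((1 / fact (Suc n)) *\<^sub>R x ^ n) = (1 / fact (Suc n)) * norm (x ^ n)" by simp
  also have "\<dots> \<le> (1 / fact n) * norm x ^ n"
  proof (rule mult_mono)
    show "1 / fact (Suc n) \<le> (1 / fact n :: real)"
      by (simp add: divide_simps fact_mono)
  qed (simp_all add: norm_power_ineq)
  finally show "norm ((1 / fact (Suc n)) *\<^sub>R x ^ n) \<le> norm x ^ n /\<^sub>R fact n"
    by (simp add: divide_inverse_commute)
qed

lemma phi_rm_prop: "x * phi_rm x = exp (x::'a::{real_normed_algebra_1,banach}) - 1"
proof -
  have "x * phi_rm x = (\<Sum>n. x * ((1 / fact (Suc n)) *\<^sub>R x ^ n))"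
    unfolding phi_rm_def by (rule suminf_mult[OF summable_phi, symmetric])
  also have "\<dots> = (\<Sum>n. inverse (fact (Suc n)) *\<^sub>R (x ^ Suc n))"
    by (simp add: inverse_eq_divide)
  also have "\<dots> = exp x - 1" using exp_first_term[of x] by simp
  finally show ?thesis .
qed

definition phi_m :: "real^'n^'n \<Rightarrow> real^'n^'n" where
  "phi_m Y = mr (phi_rm (rmat Y))"

lemma phi_m_sums: "(\<lambda>n. (1 / fact (Suc n)) *\<^sub>R mat_pow Y n) sums phi_m Y"
  unfolding phi_m_def phi_rm_def using mr_sums[OF summable_sums[OF summable_phi], of "rmat Y"]
  by (simp add: mr_rmat)

lemma phi_m_prop: "Y ** phi_m Y = mat_exp Y - mat 1"
proof -
  have "mr (rmat Y * phi_rm (rmat Y)) = mr (exp (rmat Y) - 1)" using phi_rm_prop[of "rmat Y"] by simp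
  then show ?thesis unfolding phi_m_def mat_exp_eq by (simp add: mr_diff mr_mult mr_one mr_rmat)
qed

lemma phi_m_commute:
  assumes "A ** Y = Y ** A"
  shows "A ** phi_m Y = phi_m Y ** A"
proof -
  have c: "rmat A * rmat Y = rmat Y * rmat A"
    by (rule mr_inj) (simp add: mr_mult mr_rmat assms)
  have "rmat A * phi_rm (rmat Y) = phi_rm (rmat Y) * rmat A"
    unfolding phi_rm_def
  proof (rule commute_suminf)
    show "summable (\<lambda>n. (1 / fact (Suc n)) *\<^sub>R rmat Y ^ n)" by (rule summable_phi)
    fix n show "rmat A * ((1 / fact (Suc n)) *\<^sub>R rmat Y ^ n) = ((1 / fact (Suc n)) *\<^sub>R rmat Y ^ n) * rmat A"
      using power_commuting_commutes[OF c[symmetric], of n]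
      by (simp only: mult_scaleR_right mult_scaleR_left)
  qed
  then have "mr (rmat A * phi_rm (rmat Y)) = mr (phi_rm (rmat Y) * rmat A)" by simp
  then show ?thesis unfolding phi_m_def by (simp add: mr_mult mr_rmat)
qed

abbreviation cm :: "real^'n^'m \<Rightarrow> complex^'n^'m" where "cm \<equiv> map_matrix complex_of_real"

lemma cm_mult: "cm (A ** B) = cm A ** cm B"
  by (simp add: vec_eq_iff matrix_matrix_mult_def)

lemma cm_add: "cm (A + B) = cm A + cm B" by (simp add: vec_eq_iff)
lemma cm_diff: "cm (A - B) = cm A - cm B" by (simp add: vec_eq_iff)
lemma cm_uminus: "cm (- A) = - cm A" by (simp add: vec_eq_iff)
lemma cm_mat: "cm (mat 1) = mat 1" by (simp add: vec_eq_iff mat_def)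
lemma cm_zero: "cm 0 = 0" by (simp add: vec_eq_iff)

lemma cm_inj: "cm A = cm B \<Longrightarrow> A = B"
  by (simp add: vec_eq_iff)

lemma cmv_scaleR: "cm (r *\<^sub>R A) *v u = r *\<^sub>R (cm A *v u)"
  apply (simp add: vec_eq_iff matrix_vector_mult_def scaleR_sum_right)
  apply (intro allI sum.cong refl)
  apply (simp add: scaleR_conv_of_real)
  done

lemma smult_scaleR: "r *\<^sub>R (d *s (u::complex^'n)) = (of_real r * d) *s u"
  by (simp only: vec_eq_iff vector_scaleR_component vector_smult_component) (simp add: scaleR_conv_of_real)

lemma mv_smult: "(A::'a::comm_ring_1^'n^'m) *v (c *s u) = c *s (A *v u)"
  by (simp add: vec_eq_iff matrix_vector_mult_def sum_distrib_left algebra_simps)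

lemma bounded_linear_cmv: "bounded_linear (\<lambda>M::real^'n^'m. cm M *v u)"
proof -
  have "linear (\<lambda>M::real^'n^'m. cm M *v u)"
    by (rule linearI) (simp_all add: cm_add matrix_vector_mult_add_rdistrib cmv_scaleR)
  then show ?thesis using linear_conv_bounded_linear by blast
qed

lemma bounded_linear_smult: "bounded_linear (\<lambda>z::complex. z *s (u::complex^'n))"
proof -
  have "linear (\<lambda>z::complex. z *s (u::complex^'n))"
    by (rule linearI) (simp_all add: vec_eq_iff algebra_simps)
  then show ?thesis using linear_conv_bounded_linear by blast
qed

lemma pow_eig:
  assumes "cm M *v u = l *s u"
  shows "cm (mat_pow M n) *v u = l ^ n *s u"
proof (induct n)
  case 0 show ?case by (simp add: cm_mat)
next
  case (Suc n)
  have "cm (mat_pow M (Suc n)) *v u = cm M *v (cm (mat_pow M n) *v u)"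
    by (simp add: cm_mult matrix_vector_mul_assoc)
  also have "\<dots> = l ^ Suc n *s u" using Suc assms by (simp add: mv_smult)
  finally show ?case .
qed

lemma series_eig:
  assumes S: "(\<lambda>n. c n *\<^sub>R M n) sums S"
    and e: "\<And>n. cm (M n) *v u = d n *s u"
    and z: "(\<lambda>n. of_real (c n) * d n) sums z"
  shows "cm S *v u = z *s u"
proof -
  have 1: "(\<lambda>n. cm (c n *\<^sub>R M n) *v u) sums (cm S *v u)"
    by (rule bounded_linear.sums[OF bounded_linear_cmv S])
  have "\<And>n. cm (c n *\<^sub>R M n) *v u = (of_real (c n) * d n) *s u"
    by (simp only: cmv_scaleR e smult_scaleR)
  then have 1: "(\<lambda>n. (of_real (c n) * d n) *s u) sums (cm S *v u)" using 1 by simp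
  have 2: "(\<lambda>n. (of_real (c n) * d n) *s u) sums (z *s u)"
    by (rule bounded_linear.sums[OF bounded_linear_smult z])
  show ?thesis using sums_unique2[OF 1 2] .
qed

lemma exp_eig:
  assumes "cm X *v u = l *s u"
  shows "cm (mat_exp X) *v u = exp l *s u"
proof (rule series_eig)
  show "(\<lambda>n. (1 / fact n) *\<^sub>R mat_pow X n) sums mat_exp X"
    using mat_exp_sums[of X] by (simp add: mat_exp_eq)
  show "\<And>n. cm (mat_pow X n) *v u = l ^ n *s u" by (rule pow_eig[OF assms])
  show "(\<lambda>n. complex_of_real (1 / fact n) * l ^ n) sums exp l"
    using exp_converges[of l] by (simp add: scaleR_conv_of_real divide_inverse_commute)
qed

lemma phi_eig:
  assumes "cm Y *v u = l *s u"
  shows "cm (phi_m Y) *v u = phi_rm l *s u"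
proof (rule series_eig)
  show "(\<lambda>n. (1 / fact (Suc n)) *\<^sub>R mat_pow Y n) sums phi_m Y" by (rule phi_m_sums)
  show "\<And>n. cm (mat_pow Y n) *v u = l ^ n *s u" by (rule pow_eig[OF assms])
  show "(\<lambda>n. complex_of_real (1 / fact (Suc n)) * l ^ n) sums phi_rm l"
    unfolding phi_rm_def using summable_sums[OF summable_phi[of l]]
    by (simp add: scaleR_conv_of_real)
qed

definition peval :: "complex^'n^'n \<Rightarrow> complex poly \<Rightarrow> complex^'n \<Rightarrow> complex^'n" where
  "peval A p v = (\<Sum>k<Suc (degree p). coeff p k *s ((*v) A ^^ k) v)"

lemma peval_N:
  assumes "degree p < N"
  shows "peval A p v = (\<Sum>k<N. coeff p k *s ((*v) A ^^ k) v)"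
  unfolding peval_def
proof (rule sum.mono_neutral_left)
  show "finite {..<N}" by simp
  show "{..<Suc (degree p)} \<subseteq> {..<N}" using assms by auto
  show "\<forall>i\<in>{..<N} - {..<Suc (degree p)}. coeff p i *s ((*v) A ^^ i) v = 0"
    by (auto simp: coeff_eq_0)
qed

lemma peval_add: "peval A (p + q) v = peval A p v + peval A q v"
proof -
  define N where "N = Suc (degree p + degree q)"
  have "degree (p + q) < N" unfolding N_def using degree_add_le_max[of p q] by linarith
  then have "peval A (p + q) v = (\<Sum>k<N. coeff (p + q) k *s ((*v) A ^^ k) v)" by (rule peval_N)
  also have "\<dots> = (\<Sum>k<N. coeff p k *s ((*v) A ^^ k) v) + (\<Sum>k<N. coeff q k *s ((*v) A ^^ k) v)"
    by (simp add: vector_sadd_rdistrib sum.distrib)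
  also have "\<dots> = peval A p v + peval A q v"
    by (subst (1 2) peval_N[symmetric]) (auto simp: N_def)
  finally show ?thesis .
qed

lemma peval_smult: "peval A (smult c p) v = c *s peval A p v"
proof -
  define N where "N = Suc (degree p)"
  have "degree (smult c p) < N" unfolding N_def by (simp add: less_Suc_eq_le)
  then have "peval A (smult c p) v = (\<Sum>k<N. coeff (smult c p) k *s ((*v) A ^^ k) v)" by (rule peval_N)
  also have "\<dots> = c *s (\<Sum>k<N. coeff p k *s ((*v) A ^^ k) v)"
    by (simp add: vec.scale_sum_right vector_smult_assoc)
  also have "\<dots> = c *s peval A p v"
    by (subst peval_N[symmetric]) (auto simp: N_def)
  finally show ?thesis .
qed

lemma peval_pCons0: "peval A (pCons 0 q) v = A *v peval A q v"
proof -
  define N where "N = Suc (degree q)"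
  have "degree (pCons 0 q) < Suc N" unfolding N_def using degree_pCons_le[of 0 q] by linarith
  then have "peval A (pCons 0 q) v = (\<Sum>k<Suc N. coeff (pCons 0 q) k *s ((*v) A ^^ k) v)" by (rule peval_N)
  also have "\<dots> = (\<Sum>k<N. coeff q k *s ((*v) A ^^ Suc k) v)"
    by (subst sum.lessThan_Suc_shift) simp
  also have "\<dots> = A *v (\<Sum>k<N. coeff q k *s ((*v) A ^^ k) v)"
    by (simp add: vec.sum mv_smult)
  also have "\<dots> = A *v peval A q v"
    by (subst peval_N[symmetric]) (auto simp: N_def)
  finally show ?thesis .
qed

lemma peval_const: "peval A [:c:] v = c *s v"
  by (simp add: peval_def)

lemma peval_zero: "peval A 0 v = 0"
  by (simp add: peval_def)

lemma peval_monom: "peval A (monom c k) v = c *s ((*v) A ^^ k) v"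
proof -
  have "degree (monom c k) < Suc k" by (simp add: degree_monom_le le_imp_less_Suc)
  then have "peval A (monom c k) v = (\<Sum>j<Suc k. coeff (monom c k) j *s ((*v) A ^^ j) v)" by (rule peval_N)
  also have "\<dots> = (\<Sum>j<Suc k. if j = k then c *s ((*v) A ^^ j) v else 0)"
    by (rule sum.cong) (auto simp: coeff_monom)
  also have "\<dots> = c *s ((*v) A ^^ k) v" by (simp add: sum.delta)
  finally show ?thesis .
qed

lemma peval_sum: "peval A (\<Sum>i\<in>I. f i) v = (\<Sum>i\<in>I. peval A (f i) v)"
  by (induct I rule: infinite_finite_induct) (simp_all add: peval_zero peval_add)

lemma peval_linfac: "peval A ([:-a, 1:] * q) v = A *v peval A q v - a *s peval A q v"
proof -
  have "[:-a, 1:] * q = smult (-a) q + pCons 0 q" by simp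
  then show ?thesis by (simp only: peval_add peval_smult peval_pCons0) (simp add: vec_eq_iff)
qed

lemma iter_in:
  assumes "vec.subspace S" "\<forall>w\<in>S. A *v w \<in> S" "v \<in> S"
  shows "((*v) A ^^ k) v \<in> S"
  using assms by (induct k) auto

lemma peval_in:
  assumes "vec.subspace S" "\<forall>w\<in>S. A *v w \<in> S" "v \<in> S"
  shows "peval A p v \<in> S"
  unfolding peval_def
  by (intro vec.subspace_sum[OF assms(1)] vec.subspace_scale[OF assms(1)] iter_in[OF assms])

lemma eig_from_poly:
  fixes A :: "complex^'n^'n"
  assumes S: "vec.subspace S" "\<forall>w\<in>S. A *v w \<in> S"
  shows "p \<noteq> 0 \<Longrightarrow> v \<in> S \<Longrightarrow> v \<noteq> 0 \<Longrightarrow> peval A p v = 0 \<Longrightarrow> \<exists>u\<in>S. u \<noteq> 0 \<and> (\<exists>l. A *v u = l *s u)"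
proof (induct "degree p" arbitrary: p rule: less_induct)
  case less
  show ?case
  proof (cases "degree p = 0")
    case True
    then obtain c where p: "p = [:c:]" by (metis degree_eq_zeroE)
    with less.prems have "c \<noteq> 0" by simp
    with less.prems p show ?thesis by (simp add: peval_const vec_eq_iff)
  next
    case False
    then have "\<not> constant (poly p)" by (simp add: constant_degree)
    then obtain a where "poly p a = 0" using fundamental_theorem_of_algebra by blast
    then obtain q where pq: "p = [:-a, 1:] * q" by (metis poly_eq_0_iff_dvd dvdE)
    with less.prems have q0: "q \<noteq> 0" by auto
    have "degree ([:-a,1:] * q) = degree [:-a,1:] + degree q" by (rule degree_mult_eq) (simp_all add: q0)
    then have dq: "degree q < degree p" using pq by simp
    define w where "w = peval A q v"
    have wS: "w \<in> S" unfolding w_def by (rule peval_in[OF S less.prems(2)])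
    show ?thesis
    proof (cases "w = 0")
      case True
      then show ?thesis using less.hyps[OF dq q0 less.prems(2,3)] unfolding w_def by blast
    next
      case False
      have "A *v w - a *s w = 0" using less.prems(4) unfolding pq peval_linfac w_def .
      then have "A *v w = a *s w" by simp
      then show ?thesis using wS False by blast
    qed
  qed
qed

lemma eig_in_subspace:
  fixes A :: "complex^'n^'n"
  assumes S: "vec.subspace S" "\<forall>w\<in>S. A *v w \<in> S" and v: "v \<in> S" "v \<noteq> 0"
  shows "\<exists>u\<in>S. u \<noteq> 0 \<and> (\<exists>l. A *v u = l *s u)"
proof -
  let ?n = "CARD('n)"
  let ?w = "\<lambda>k. ((*v) A ^^ k) v"
  have "\<exists>p. p \<noteq> 0 \<and> peval A p v = 0"
  proof (cases "inj_on ?w {..?n}")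
    case False
    then obtain i j where ij: "i \<le> ?n" "j \<le> ?n" "i \<noteq> j" "?w i = ?w j"
      unfolding inj_on_def by auto
    let ?p = "monom (1::complex) i - monom 1 j"
    have "coeff ?p i = 1" using ij by (simp add: coeff_monom)
    then have "?p \<noteq> 0" by (metis coeff_0 zero_neq_one)
    moreover have "peval A ?p v = 0"
    proof -
      have "?p = monom 1 i + smult (-1) (monom 1 j)" by simp
      then show ?thesis using ij(4) by (simp only: peval_add peval_smult peval_monom) (simp add: vec_eq_iff)
    qed
    ultimately show ?thesis by blast
  next
    case True
    let ?T = "?w ` {..?n}"
    have cT: "card ?T = Suc ?n" using True by (simp add: card_image)
    have "vec.dim ?T \<le> ?n" using vec.dim_subset_UNIV[of ?T] by (simp add: vec.dimension_def card_cart_basis)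
    then have "vec.dependent ?T" using cT by (intro vec.dependent_biggerset_general) simp
    then obtain u where u: "\<exists>x\<in>?T. u x \<noteq> 0" "(\<Sum>x\<in>?T. u x *s x) = 0"
      using vec.dependent_finite[of ?T] by auto
    let ?p = "\<Sum>k\<le>?n. monom (u (?w k)) k"
    have coeff: "coeff ?p k = u (?w k)" if "k \<le> ?n" for k
      using that by (simp add: coeff_sum coeff_monom)
    from u(1) obtain k where k: "k \<le> ?n" "u (?w k) \<noteq> 0" by auto
    then have "?p \<noteq> 0" using coeff[OF k(1)] by auto
    moreover have "peval A ?p v = (\<Sum>k\<le>?n. u (?w k) *s ?w k)"
      by (simp add: peval_sum peval_monom)
    moreover have "\<dots> = (\<Sum>x\<in>?T. u x *s x)"
      using sum.reindex[OF True, of "\<lambda>x. u x *s x"] by simp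
    ultimately show ?thesis using u(2) by auto
  qed
  then obtain p where "p \<noteq> 0" "peval A p v = 0" by blast
  then show ?thesis using eig_from_poly[OF S] v by blast
qed

definition cinner :: "complex^'n \<Rightarrow> complex^'n \<Rightarrow> complex" where
  "cinner x y = (\<Sum>i\<in>UNIV. cnj (x$i) * y$i)"

lemma cinner_add_right: "cinner x (y + z) = cinner x y + cinner x z"
  by (simp add: cinner_def algebra_simps sum.distrib)
lemma cinner_diff_right: "cinner x (y - z) = cinner x y - cinner x z"
  by (simp add: cinner_def algebra_simps sum_subtractf)
lemma cinner_smult_right: "cinner x (c *s y) = c * cinner x y"
  by (simp add: cinner_def sum_distrib_left algebra_simps)
lemma cinner_smult_left: "cinner (c *s x) y = cnj c * cinner x y"
  by (simp add: cinner_def sum_distrib_left algebra_simps)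
lemma cinner_zero_right: "cinner x 0 = 0" by (simp add: cinner_def)
lemma cinner_zero_left: "cinner 0 x = 0" by (simp add: cinner_def)
lemma cinner_sum_right: "cinner x (\<Sum>i\<in>I. f i) = (\<Sum>i\<in>I. cinner x (f i))"
  by (induct I rule: infinite_finite_induct) (simp_all add: cinner_zero_right cinner_add_right)
lemma cinner_sum_left: "cinner (\<Sum>i\<in>I. f i) x = (\<Sum>i\<in>I. cinner (f i) x)"
  by (induct I rule: infinite_finite_induct)
     (simp_all add: cinner_zero_left cinner_def algebra_simps sum.distrib)
lemma cinner_sym: "cinner x y = cnj (cinner y x)"
  by (simp add: cinner_def mult.commute)

lemma norm_sq_vec: "norm (x::'a::real_normed_vector^'n) ^ 2 = (\<Sum>i\<in>UNIV. norm (x$i) ^ 2)"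
  unfolding norm_vec_def L2_set_def by (simp add: sum_nonneg)

lemma cinner_self: "cinner x x = of_real (norm x ^ 2)"
proof -
  have "cinner x x = (\<Sum>i\<in>UNIV. of_real (norm (x$i) ^ 2))"
    unfolding cinner_def by (rule sum.cong[OF refl]) (metis complex_norm_square mult.commute)
  also have "\<dots> = of_real (norm x ^ 2)" by (simp add: norm_sq_vec)
  finally show ?thesis .
qed

lemma cinner_self_eq0: "cinner x x = 0 \<longleftrightarrow> x = 0"
  by (simp add: cinner_self)

lemma cinner_adj: "cinner x (cm M *v y) = cinner (cm (transpose M) *v x) y"
  unfolding cinner_def matrix_vector_mult_def
  by (simp add: sum_distrib_left sum_distrib_right transpose_def algebra_simps)
     (rule sum.swap)

definition orthonormal :: "(complex^'n) set \<Rightarrow> bool" where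
  "orthonormal B \<longleftrightarrow> (\<forall>b\<in>B. cinner b b = 1) \<and> (\<forall>b\<in>B. \<forall>c\<in>B. b \<noteq> c \<longrightarrow> cinner b c = 0)"

lemma orthonormal_coeff:
  assumes "orthonormal B" "finite B" "c \<in> B"
  shows "cinner c (\<Sum>b\<in>B. f b *s b) = f c"
proof -
  have "cinner c (\<Sum>b\<in>B. f b *s b) = (\<Sum>b\<in>B. f b * cinner c b)"
    by (simp add: cinner_sum_right cinner_smult_right)
  also have "\<dots> = (\<Sum>b\<in>B. if b = c then f c else 0)"
    by (rule sum.cong) (use assms in \<open>auto simp: orthonormal_def\<close>)
  also have "\<dots> = f c" using assms by (simp add: sum.delta')
  finally show ?thesis .
qed

lemma orthonormal_card:
  assumes "orthonormal (B::(complex^'n) set)" "finite B"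
  shows "card B \<le> CARD('n)"
proof -
  have "vec.independent B"
    unfolding vec.independent_explicit
  proof (intro conjI allI impI ballI)
    show "finite B" by fact
    fix c :: "complex^'n \<Rightarrow> complex" and v assume "(\<Sum>v\<in>B. c v *s v) = 0" "v \<in> B"
    then show "c v = 0" using orthonormal_coeff[OF assms \<open>v \<in> B\<close>, of c] by (simp add: cinner_zero_right)
  qed
  then have "card B \<le> vec.dim B" using vec.independent_bound_general by blast
  also have "\<dots> \<le> CARD('n)" using vec.dim_subset_UNIV[of B] by (simp add: vec.dimension_def card_cart_basis)
  finally show ?thesis .
qed

definition eigB :: "real^'n^'n \<Rightarrow> (complex^'n) set \<Rightarrow> bool" where
  "eigB V B \<longleftrightarrow> finite B \<and> orthonormal B \<and> (\<forall>b\<in>B. \<exists>m. cm V *v b = m *s b)"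

lemma orth_inv_eig:
  assumes V: "orthogonal_matrix V" and e: "cm V *v b = m *s b" and b: "b \<noteq> 0"
  shows "m \<noteq> 0" "cm (transpose V) *v b = inverse m *s b"
proof -
  have tv: "transpose V ** V = mat 1" using V by (simp add: orthogonal_matrix_def)
  have "cm (transpose V) *v (cm V *v b) = b"
    by (simp add: matrix_vector_mul_assoc flip: cm_mult) (simp add: tv cm_mat)
  then have 1: "m *s (cm (transpose V) *v b) = b" by (simp add: e mv_smult)
  then show "m \<noteq> 0" using b by auto
  then show "cm (transpose V) *v b = inverse m *s b"
    using arg_cong[OF 1, of "\<lambda>x. inverse m *s x"] by (simp add: vector_smult_assoc)
qed

lemma eigbasis_exists:
  assumes V: "orthogonal_matrix (V::real^'n^'n)"
  shows "\<exists>B. eigB V B \<and> (\<forall>x. x = (\<Sum>b\<in>B. cinner b x *s b))"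
proof -
  have "\<exists>B. eigB V B \<and> (\<forall>C. eigB V C \<longrightarrow> card C \<le> card B)"
  proof (rule Lattices_Big.ex_has_greatest_nat[of "eigB V" "{}" card "Suc CARD('n)"])
    show "eigB V {}" by (simp add: eigB_def orthonormal_def)
    show "\<forall>y. eigB V y \<longrightarrow> card y < Suc CARD('n)"
      using orthonormal_card by (auto simp: eigB_def less_Suc_eq_le)
  qed
  then obtain B where B: "eigB V B" and maxB: "\<And>C. eigB V C \<Longrightarrow> card C \<le> card B" by blast
  have fB: "finite B" and oB: "orthonormal B" and eB: "\<forall>b\<in>B. \<exists>m. cm V *v b = m *s b"
    using B by (auto simp: eigB_def)
  let ?S = "{w. \<forall>b\<in>B. cinner b w = 0}"
  have S0: "\<forall>w\<in>?S. w = 0"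
  proof (rule ccontr)
    assume "\<not> (\<forall>w\<in>?S. w = 0)"
    then obtain w where w: "w \<in> ?S" "w \<noteq> 0" by blast
    have sub: "vec.subspace ?S"
      by (auto simp: vec.subspace_def cinner_add_right cinner_smult_right cinner_zero_right)
    have inv: "\<forall>w\<in>?S. cm V *v w \<in> ?S"
    proof (intro ballI, simp, intro ballI)
      fix w b assume w: "\<forall>b\<in>B. cinner b w = 0" and b: "b \<in> B"
      obtain m where m: "cm V *v b = m *s b" using eB b by blast
      have "b \<noteq> 0" using oB b by (auto simp: orthonormal_def cinner_zero_left)
      then have "cm (transpose V) *v b = inverse m *s b" using orth_inv_eig[OF V m] by blast
      then show "cinner b (cm V *v w) = 0"
        by (simp add: cinner_adj cinner_smult_left w b)
    qed
    obtain u l where u: "u \<in> ?S" "u \<noteq> 0" "cm V *v u = l *s u"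
      using eig_in_subspace[OF sub inv w] by blast
    define u' where "u' = of_real (1 / norm u) *s u"
    have nu: "norm u \<noteq> 0" using u by simp
    have "cinner u' u' = cnj (of_real (1 / norm u)) * (of_real (1 / norm u) * cinner u u)"
      by (simp only: u'_def cinner_smult_left cinner_smult_right mult.left_commute)
    also have "\<dots> = of_real ((1 / norm u) * (1 / norm u) * norm u ^ 2)"
      by (simp only: cinner_self complex_cnj_complex_of_real of_real_mult mult.assoc)
    also have "\<dots> = 1" using nu by (simp add: power2_eq_square)
    finally have u'1: "cinner u' u' = 1" .
    have u'S: "u' \<in> ?S" using u(1) unfolding u'_def by (simp add: cinner_smult_right)
    have u'B: "u' \<notin> B" using u'S u'1 by auto
    have "eigB V (insert u' B)"
      unfolding eigB_def orthonormal_def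
    proof (intro conjI ballI impI)
      show "finite (insert u' B)" using fB by simp
      fix b assume "b \<in> insert u' B"
      then show "cinner b b = 1" using u'1 oB by (auto simp: orthonormal_def)
      show "\<exists>m. cm V *v b = m *s b" using \<open>b \<in> insert u' B\<close> eB u(3)
        by (auto simp: u'_def mv_smult vector_smult_assoc mult.commute)
      fix c assume "c \<in> insert u' B" "b \<noteq> c"
      then show "cinner b c = 0" using \<open>b \<in> insert u' B\<close> oB u'S
        by (auto simp: orthonormal_def cinner_sym[of u'])
    qed
    then have "card (insert u' B) \<le> card B" by (rule maxB)
    then show False using fB u'B by simp
  qed
  have "\<forall>x. x = (\<Sum>b\<in>B. cinner b x *s b)"
  proof
    fix x
    let ?r = "x - (\<Sum>b\<in>B. cinner b x *s b)"
    have "?r \<in> ?S" using orthonormal_coeff[OF oB fB] by (simp add: cinner_diff_right)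
    then show "x = (\<Sum>b\<in>B. cinner b x *s b)" using S0 by auto
  qed
  then show ?thesis using B by blast
qed

definition vre :: "complex^'n \<Rightarrow> real^'n" where "vre x = (\<chi> i. Re (x$i))"
definition vim :: "complex^'n \<Rightarrow> real^'n" where "vim x = (\<chi> i. Im (x$i))"
definition cv :: "real^'n \<Rightarrow> complex^'n" where "cv x = (\<chi> i. complex_of_real (x$i))"

lemma norm_cvec: "norm x ^ 2 = norm (vre x) ^ 2 + norm (vim x) ^ 2"
  by (simp add: norm_sq_vec vre_def vim_def cmod_power2 sum.distrib)

lemma vre_cm: "vre (cm M *v x) = M *v vre x"
  by (simp add: vec_eq_iff vre_def matrix_vector_mult_def Re_sum)
lemma vim_cm: "vim (cm M *v x) = M *v vim x"
  by (simp add: vec_eq_iff vim_def matrix_vector_mult_def Im_sum)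

lemma norm_cm_le: "norm (cm M *v x) \<le> spec_norm M * norm x"
proof -
  let ?K = "spec_norm M"
  have K: "?K \<ge> 0" unfolding spec_norm_def by (rule onorm_pos_le) simp
  have b: "norm (M *v y) \<le> ?K * norm y" for y
    unfolding spec_norm_def by (rule onorm[OF matrix_vector_mul_bounded_linear])
  have "norm (cm M *v x) ^ 2 = norm (M *v vre x) ^ 2 + norm (M *v vim x) ^ 2"
    by (simp only: norm_cvec vre_cm vim_cm)
  also have "\<dots> \<le> (?K * norm (vre x)) ^ 2 + (?K * norm (vim x)) ^ 2"
    by (intro add_mono power_mono b norm_ge_zero)
  also have "\<dots> = (?K * norm x) ^ 2" by (simp only: power_mult_distrib norm_cvec[of x] distrib_left)
  finally have "norm (cm M *v x) ^ 2 \<le> (?K * norm x) ^ 2" .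
  then show ?thesis by (rule power2_le_imp_le) (use K in simp)
qed

lemma norm_cm_orth:
  assumes "orthogonal_matrix V"
  shows "norm (cm V *v x) = norm x"
proof -
  have ot: "orthogonal_transformation ((*v) V)"
    using assms orthogonal_transformation_matrix[of "(*v) V"] by simp
  have "norm (cm V *v x) ^ 2 = norm x ^ 2"
    by (simp add: norm_cvec vre_cm vim_cm orthogonal_transformation_norm[OF ot])
  then show ?thesis by (simp add: power2_eq_iff_nonneg)
qed

lemma norm_smult_c: "norm (c *s (x::complex^'n)) = cmod c * norm x"
proof -
  have "norm (c *s x) ^ 2 = (cmod c * norm x) ^ 2"
    by (simp add: norm_sq_vec norm_mult power_mult_distrib sum_distrib_left)
  then show ?thesis by (simp add: power2_eq_iff_nonneg)
qed

lemma norm_cv: "norm (cv x) = norm x"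
  by (simp add: norm_vec_def cv_def)

lemma cm_cv: "cm M *v cv x = cv (M *v x)"
  by (simp add: vec_eq_iff cv_def matrix_vector_mult_def)

lemma eig_bounds:
  assumes V: "orthogonal_matrix V" and e: "cm V *v w = m *s w" and w: "w \<noteq> 0"
  shows "cmod m = 1" "cmod (m - 1) \<le> spec_norm (V - mat 1)"
proof -
  have nw: "norm w > 0" using w by simp
  have "cmod m * norm w = norm w" using norm_cm_orth[OF V, of w] by (simp add: e norm_smult_c)
  then show "cmod m = 1" using nw by simp
  have e1: "cm (V - mat 1) *v w = (m - 1) *s w"
    by (simp only: cm_diff cm_mat matrix_vector_mult_diff_rdistrib matrix_vector_mul_lid e) (simp add: vec_eq_iff algebra_simps)
  then have "cmod (m - 1) * norm w \<le> spec_norm (V - mat 1) * norm w"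
    using norm_cm_le[of "V - mat 1" w] by (simp only: e1 norm_smult_c)
  then show "cmod (m - 1) \<le> spec_norm (V - mat 1)" using nw by simp
qed

lemma arg_bound:
  fixes t s :: real
  assumes "\<bar>t\<bar> < pi/2" "cmod (exp (\<i> * of_real t) - 1) \<le> s" "s \<le> 1"
  shows "\<bar>t\<bar> \<le> 2 * arcsin (s/2)"
proof -
  have "cmod (exp (\<i> * of_real t) - 1) ^ 2 = (cos t - 1) ^ 2 + (sin t) ^ 2"
    by (simp add: exp_Euler cmod_power2 cos_of_real sin_of_real)
  also have "\<dots> = 2 - 2 * cos t" by (simp add: power2_eq_square algebra_simps sin_squared_eq)
  also have "\<dots> = 4 * sin (t/2) ^ 2" using cos_double_sin[of "t/2"] by simp
  finally have "4 * sin (t/2) ^ 2 \<le> s ^ 2"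
    using assms(2) by (metis norm_ge_zero power_mono)
  then have "(2 * \<bar>sin (t/2)\<bar>) ^ 2 \<le> s ^ 2" by (simp add: power_mult_distrib)
  moreover have "s \<ge> 0" using assms(2) norm_ge_zero order_trans by blast
  ultimately have "2 * \<bar>sin (t/2)\<bar> \<le> s" using power2_le_imp_le by blast
  moreover have "\<bar>sin (t/2)\<bar> = sin \<bar>t/2\<bar>"
  proof (cases "t \<ge> 0")
    case True
    then have "sin (t/2) \<ge> 0" using assms(1) by (intro sin_ge_zero) auto
    then show ?thesis using True by simp
  next
    case False
    then have "sin (-t/2) \<ge> 0" using assms(1) by (intro sin_ge_zero) auto
    then show ?thesis using False by simp
  qed
  ultimately have 1: "sin \<bar>t/2\<bar> \<le> s/2" by simp
  have b: "-(pi/2) \<le> \<bar>t/2\<bar>" "\<bar>t/2\<bar> \<le> pi/2" using assms(1) by auto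
  have "\<bar>t/2\<bar> = arcsin (sin \<bar>t/2\<bar>)" using arcsin_sin[OF b] by simp
  also have "\<dots> \<le> arcsin (s/2)"
    using 1 assms(3) sin_ge_minus_one[of "\<bar>t/2\<bar>"] by (intro arcsin_le_arcsin) linarith+
  finally show ?thesis by simp
qed

lemma x_le_tan:
  fixes x :: real
  assumes "0 \<le> x" "x < pi/2"
  shows "x \<le> tan x"
proof -
  have "0 * cos 0 - sin 0 \<le> (\<lambda>y. sin y - y * cos y) x - (\<lambda>y. sin y - y * cos y) 0" 
  proof -
    have "(\<lambda>y. sin y - y * cos y) 0 \<le> (\<lambda>y. sin y - y * cos y) x"
    proof (rule DERIV_nonneg_imp_increasing_open[OF assms(1)])
      fix y :: real assume y: "0 < y" "y < x"
      have "DERIV (\<lambda>y. sin y - y * cos y) y :> cos y - (cos y - y * sin y)"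
        by (auto intro!: derivative_eq_intros)
      moreover have "cos y - (cos y - y * sin y) \<ge> 0"
        using y assms sin_gt_zero[of y] by (simp add: less_imp_le)
      ultimately show "\<exists>d. DERIV (\<lambda>y. sin y - y * cos y) y :> d \<and> d \<ge> 0" by blast
    next
      show "continuous_on {0..x} (\<lambda>y. sin y - y * cos y)" by (intro continuous_intros)
    qed
    then show ?thesis by simp
  qed
  then have "x * cos x \<le> sin x" by simp
  moreover have "cos x > 0" using assms by (intro cos_gt_zero_pi) auto
  ultimately show ?thesis by (simp add: tan_def pos_le_divide_eq)
qed

lemma final_trig:
  fixes r s :: real
  assumes "0 \<le> s" "s < r" "r < 1"
  shows "2 * arcsin (s/2) < r * sqrt (1 - r^2 / 4) / (1 - r^2 / 2)"
proof -
  define a where "a = arcsin (r/2)"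
  have r0: "0 < r" using assms by simp
  have "2 * arcsin (s/2) < 2 * a" unfolding a_def
    using arcsin_less_arcsin[of "s/2" "r/2"] assms by simp
  have sa: "sin a = r/2" unfolding a_def using assms by simp
  have ca: "cos a = sqrt (1 - (r/2)^2)" unfolding a_def by (rule cos_arcsin) (use assms in auto)
  have a0: "0 \<le> a" unfolding a_def using assms by (intro arcsin_nonneg) auto
  have "a \<le> arcsin (1/2)" unfolding a_def using assms by (intro arcsin_le_arcsin) auto
  also have "arcsin (1/2) = pi/6"
    using arcsin_sin[of "pi/6"] by (simp add: sin_30)
  finally have a6: "a \<le> pi / 6" .
  have "2 * a \<le> tan (2 * a)" using a0 a6 pi_gt_zero by (intro x_le_tan) linarith+
  also have "tan (2 * a) = sin (2*a) / cos (2*a)" by (simp add: tan_def)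
  also have "\<dots> = r * sqrt (1 - r^2 / 4) / (1 - r^2 / 2)"
    by (simp add: sin_double cos_double_sin sa ca power_divide)
  finally show ?thesis using \<open>2 * arcsin (s/2) < 2 * a\<close> by linarith
qed

lemma eq_on_basis:
  fixes M1 M2 :: "complex^'n^'n"
  assumes "\<forall>x. x = (\<Sum>b\<in>B. cinner b x *s b)" "\<forall>b\<in>B. M1 *v b = M2 *v b"
  shows "M1 = M2"
proof (rule iffD2[OF matrix_eq], rule allI)
  fix x
  have "M1 *v x = M1 *v (\<Sum>b\<in>B. cinner b x *s b)" using assms(1) by metis
  also have "\<dots> = (\<Sum>b\<in>B. cinner b x *s (M1 *v b))" by (simp add: vec.sum mv_smult)
  also have "\<dots> = (\<Sum>b\<in>B. cinner b x *s (M2 *v b))" using assms(2) by simp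
  also have "\<dots> = M2 *v (\<Sum>b\<in>B. cinner b x *s b)" by (simp add: vec.sum mv_smult)
  also have "\<dots> = M2 *v x" using assms(1) by metis
  finally show "M1 *v x = M2 *v x" .
qed

lemma parseval:
  assumes "orthonormal B" "finite B"
  shows "norm (\<Sum>b\<in>B. f b *s b) ^ 2 = (\<Sum>b\<in>B. cmod (f b) ^ 2)"
proof -
  let ?S = "\<Sum>b\<in>B. f b *s b"
  have "complex_of_real (norm ?S ^ 2) = cinner ?S ?S" by (simp add: cinner_self)
  also have "\<dots> = (\<Sum>b\<in>B. cnj (f b) * cinner b ?S)"
    by (simp add: cinner_sum_left cinner_smult_left)
  also have "\<dots> = (\<Sum>b\<in>B. cnj (f b) * f b)"
    by (rule sum.cong) (simp_all add: orthonormal_coeff[OF assms])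
  also have "\<dots> = (\<Sum>b\<in>B. complex_of_real (cmod (f b) ^ 2))"
    by (rule sum.cong[OF refl]) (metis complex_norm_square mult.commute)
  also have "\<dots> = complex_of_real (\<Sum>b\<in>B. cmod (f b) ^ 2)" by (rule of_real_sum[symmetric])
  finally show ?thesis using of_real_eq_iff by blast
qed

lemma mm_diff_l: "(A::real^'n^'n) ** (B - C) = A ** B - A ** C"
  by (simp add: matrix_matrix_mult_def vec_eq_iff sum_subtractf algebra_simps)
lemma mm_diff_r: "((B::real^'n^'n) - C) ** A = B ** A - C ** A"
  by (simp add: matrix_matrix_mult_def vec_eq_iff sum_subtractf algebra_simps)
lemma mm_neg_l: "(- (A::real^'n^'n)) ** B = - (A ** B)"
  by (simp add: matrix_matrix_mult_def vec_eq_iff sum_negf)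
lemma mm_neg_r: "(A::real^'n^'n) ** (- B) = - (A ** B)"
  by (simp add: matrix_matrix_mult_def vec_eq_iff sum_negf)

lemma phi_rm_0: "phi_rm (0::'a::{real_normed_algebra_1,banach}) = 1"
proof -
  have "phi_rm (0::'a) = (\<Sum>n. of_real (1 / fact (Suc n)) * (0::'a) ^ n)"
    unfolding phi_rm_def by (simp add: scaleR_conv_of_real)
  also have "\<dots> = 1" by (subst powser_zero) simp
  finally show ?thesis .
qed

definition vc :: "complex^'n \<Rightarrow> complex^'n" where "vc x = (\<chi> i. cnj (x$i))"

lemma vc_vc: "vc (vc x) = x" by (simp add: vc_def vec_eq_iff)
lemma vc_smult: "vc (c *s x) = cnj c *s vc x" by (simp add: vc_def vec_eq_iff)
lemma cm_vc: "cm M *v vc x = vc (cm M *v x)"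
  by (simp add: vc_def vec_eq_iff matrix_vector_mult_def)
lemma cnjm_vc: "map_matrix cnj M *v x = vc (M *v vc x)"
  by (simp add: vc_def vec_eq_iff matrix_vector_mult_def)

lemma smult_eq_0: "c *s (u::complex^'n) = 0 \<Longrightarrow> u \<noteq> 0 \<Longrightarrow> c = 0"
  by (auto simp: vec_eq_iff)

locale orth_small =
  fixes V :: "real^'n^'n" and B :: "(complex^'n) set"
  assumes orth: "orthogonal_matrix V" and small: "spec_norm (V - mat 1) < 1"
    and eigB: "eigB V B" and expand: "\<forall>x. x = (\<Sum>b\<in>B. cinner b x *s b)"
begin

definition ev :: "complex^'n \<Rightarrow> complex" where "ev b = (SOME m. cm V *v b = m *s b)"

lemma fB: "finite B" and oB: "orthonormal B" using eigB by (auto simp: eigB_def)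

lemma ev: "b \<in> B \<Longrightarrow> cm V *v b = ev b *s b"
  unfolding ev_def using eigB by (auto simp: eigB_def intro: someI_ex)

lemma b_nz: "b \<in> B \<Longrightarrow> b \<noteq> 0"
  using oB by (auto simp: orthonormal_def cinner_zero_left)

lemma eig_props:
  assumes "cm V *v w = m *s w" "w \<noteq> 0"
  shows "cmod m = 1" "cmod (m - 1) < 1" "Re m > 0" "m \<noteq> 0" "m \<notin> \<real>\<^sub>\<le>\<^sub>0" "\<bar>Im (Ln m)\<bar> < pi/2"
proof -
  show "cmod m = 1" using eig_bounds[OF orth assms] by simp
  show m1: "cmod (m - 1) < 1" using eig_bounds[OF orth assms] small by simp
  have "1 - Re m \<le> cmod (m - 1)" using abs_Re_le_cmod[of "m - 1"] by simp
  then show re: "Re m > 0" using m1 by simp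
  then show m0: "m \<noteq> 0" by auto
  show "m \<notin> \<real>\<^sub>\<le>\<^sub>0" using re by (auto simp: complex_nonpos_Reals_iff)
  show "\<bar>Im (Ln m)\<bar> < pi/2" using Re_Ln_pos_lt[OF m0] re by simp
qed

definition Lc :: "complex^'n^'n" where
  "Lc = (\<chi> i j. \<Sum>b\<in>B. Ln (ev b) * cnj (b$j) * b$i)"

lemma Lc_apply: "Lc *v x = (\<Sum>b\<in>B. (Ln (ev b) * cinner b x) *s b)"
proof (unfold vec_eq_iff, rule allI)
  fix i
  have "(Lc *v x)$i = (\<Sum>j\<in>UNIV. \<Sum>b\<in>B. Ln (ev b) * cnj (b$j) * b$i * x$j)"
    by (simp add: Lc_def matrix_vector_mult_def sum_distrib_right)
  also have "\<dots> = (\<Sum>b\<in>B. \<Sum>j\<in>UNIV. Ln (ev b) * cnj (b$j) * b$i * x$j)" by (rule sum.swap)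
  also have "\<dots> = (\<Sum>b\<in>B. (Ln (ev b) * cinner b x) * b$i)"
  proof (rule sum.cong[OF refl])
    fix b
    have "(Ln (ev b) * cinner b x) * b$i = (\<Sum>j\<in>UNIV. (Ln (ev b) * (cnj (b$j) * x$j)) * b$i)"
      unfolding cinner_def by (simp only: sum_distrib_left sum_distrib_right)
    also have "\<dots> = (\<Sum>j\<in>UNIV. Ln (ev b) * cnj (b$j) * b$i * x$j)"
      by (rule sum.cong[OF refl]) (simp only: mult_ac)
    finally show "(\<Sum>j\<in>UNIV. Ln (ev b) * cnj (b$j) * b$i * x$j) = (Ln (ev b) * cinner b x) * b$i" by simp
  qed
  also have "\<dots> = (\<Sum>b\<in>B. (Ln (ev b) * cinner b x) *s b) $ i" by (simp add: sum_component)
  finally show "(Lc *v x)$i = (\<Sum>b\<in>B. (Ln (ev b) * cinner b x) *s b) $ i" .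
qed

lemma coeff_V: "b \<in> B \<Longrightarrow> cinner b (cm V *v w) = ev b * cinner b w"
proof -
  assume b: "b \<in> B"
  have "cm V *v w = cm V *v (\<Sum>c\<in>B. cinner c w *s c)" using expand by metis
  also have "\<dots> = (\<Sum>c\<in>B. (cinner c w * ev c) *s c)"
    by (simp add: vec.sum mv_smult ev vector_smult_assoc)
  finally show ?thesis using orthonormal_coeff[OF oB fB b] by (simp add: mult.commute)
qed

lemma KP:
  assumes "cm V *v w = m *s w"
  shows "Lc *v w = Ln m *s w"
proof -
  have c: "cinner b w = 0 \<or> ev b = m" if b: "b \<in> B" for b
  proof -
    have "ev b * cinner b w = m * cinner b w"
      using coeff_V[OF b, of w] by (metis assms cinner_smult_right)
    then show ?thesis by (metis mult_cancel_right)
  qed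
  have "Lc *v w = (\<Sum>b\<in>B. (Ln m * cinner b w) *s b)"
    unfolding Lc_apply by (rule sum.cong) (use c in auto)
  also have "\<dots> = Ln m *s (\<Sum>b\<in>B. cinner b w *s b)"
    by (simp add: vec.scale_sum_right vector_smult_assoc)
  also have "\<dots> = Ln m *s w" using expand by metis
  finally show ?thesis .
qed

lemma Lc_b: "b \<in> B \<Longrightarrow> Lc *v b = Ln (ev b) *s b"
  using KP ev by blast

lemma Lc_real: "map_matrix cnj Lc = Lc"
proof (rule eq_on_basis[OF expand], intro ballI)
  fix b assume b: "b \<in> B"
  have p: "\<bar>Im (Ln (ev b))\<bar> < pi/2" "ev b \<notin> \<real>\<^sub>\<le>\<^sub>0" using eig_props[OF ev[OF b] b_nz[OF b]] by auto
  have "cm V *v vc b = cnj (ev b) *s vc b" by (simp add: cm_vc ev[OF b] vc_smult)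
  then have "Lc *v vc b = Ln (cnj (ev b)) *s vc b" by (rule KP)
  then have "map_matrix cnj Lc *v b = cnj (Ln (cnj (ev b))) *s b"
    by (simp add: cnjm_vc vc_smult vc_vc)
  also have "cnj (Ln (cnj (ev b))) = Ln (ev b)"
    using cnj_Ln[OF p(2)] by (metis complex_cnj_cnj)
  finally show "map_matrix cnj Lc *v b = Lc *v b" by (simp add: Lc_b[OF b])
qed

definition L :: "real^'n^'n" where "L = map_matrix Re Lc"

lemma cm_L: "cm L = Lc"
proof -
  have "cnj (Lc $ i $ j) = Lc $ i $ j" for i j
    using arg_cong[OF Lc_real, of "\<lambda>M. M $ i $ j"] by simp
  then have "Im (Lc $ i $ j) = 0" for i j by (metis Reals_cnj_iff complex_is_Real_iff)
  then show ?thesis by (simp add: L_def vec_eq_iff complex_eq_iff)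
qed

lemma exp_L: "mat_exp L = V"
proof -
  have "cm (mat_exp L) = cm V"
  proof (rule eq_on_basis[OF expand], intro ballI)
    fix b assume b: "b \<in> B"
    have "cm L *v b = Ln (ev b) *s b" using Lc_b[OF b] by (simp add: cm_L)
    then have "cm (mat_exp L) *v b = exp (Ln (ev b)) *s b" by (rule exp_eig)
    also have "\<dots> = cm V *v b" using eig_props[OF ev[OF b] b_nz[OF b]] by (simp add: ev[OF b])
    finally show "cm (mat_exp L) *v b = cm V *v b" .
  qed
  then show ?thesis by (rule cm_inj)
qed

lemma L_eig:
  assumes "cplx_eigenvalue L l"
  shows "\<bar>Im l\<bar> < pi/2"
proof -
  obtain v where v: "v \<noteq> 0" "cm L *v v = l *s v" using assms by (auto simp: cplx_eigenvalue_def)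
  have "\<exists>b\<in>B. cinner b v \<noteq> 0"
  proof (rule ccontr)
    assume "\<not> (\<exists>b\<in>B. cinner b v \<noteq> 0)"
    then have "(\<Sum>b\<in>B. cinner b v *s b) = 0" by simp
    then show False using expand v(1) by metis
  qed
  then obtain b where b: "b \<in> B" "cinner b v \<noteq> 0" by blast
  have "cinner b (cm L *v v) = Ln (ev b) * cinner b v"
    unfolding cm_L Lc_apply using orthonormal_coeff[OF oB fB b(1)] by simp
  moreover have "cinner b (cm L *v v) = l * cinner b v" by (simp add: v(2) cinner_smult_right)
  ultimately have "l = Ln (ev b)" using b(2) by simp
  then show ?thesis using eig_props[OF ev[OF b(1)] b_nz[OF b(1)]] by simp
qed

lemma L_norm: "spec_norm L \<le> 2 * arcsin (spec_norm (V - mat 1) / 2)"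
proof -
  let ?s = "spec_norm (V - mat 1)"
  let ?th = "2 * arcsin (?s / 2)"
  have s0: "?s \<ge> 0" unfolding spec_norm_def by (rule onorm_pos_le) simp
  have th0: "?th \<ge> 0" using s0 small by (simp add: arcsin_nonneg)
  have lnb: "cmod (Ln (ev b)) \<le> ?th" if b: "b \<in> B" for b
  proof -
    note p = eig_props[OF ev[OF b] b_nz[OF b]]
    define t where "t = Im (Ln (ev b))"
    have "Re (Ln (ev b)) = 0" using p by simp
    then have lt: "Ln (ev b) = \<i> * of_real t" unfolding t_def by (simp add: complex_eq_iff)
    have "exp (\<i> * of_real t) = ev b" using p by (simp flip: lt)
    then have "cmod (exp (\<i> * of_real t) - 1) \<le> ?s" using eig_bounds[OF orth ev[OF b] b_nz[OF b]] by simp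
    then have "\<bar>t\<bar> \<le> ?th" using p small unfolding t_def by (intro arg_bound) auto
    then show ?thesis by (simp add: lt norm_mult)
  qed
  have "onorm ((*v) L) \<le> ?th"
  proof (rule onorm_le)
    fix x :: "real^'n"
    define y where "y = cv x"
    have e1: "norm (L *v x) = norm (cm L *v y)" by (simp add: y_def cm_cv norm_cv)
    have e2: "cm L *v y = (\<Sum>b\<in>B. (Ln (ev b) * cinner b y) *s b)" by (simp only: cm_L Lc_apply)
    have "norm (L *v x) ^ 2 = (\<Sum>b\<in>B. cmod (Ln (ev b) * cinner b y) ^ 2)"
      unfolding e1 e2 by (rule parseval[OF oB fB])
    also have "\<dots> \<le> (\<Sum>b\<in>B. (?th * cmod (cinner b y)) ^ 2)"
    proof (rule sum_mono)
      fix b assume b: "b \<in> B"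
      have "cmod (Ln (ev b) * cinner b y) \<le> ?th * cmod (cinner b y)"
        unfolding norm_mult by (rule mult_right_mono[OF lnb[OF b] norm_ge_zero])
      then show "cmod (Ln (ev b) * cinner b y) ^ 2 \<le> (?th * cmod (cinner b y)) ^ 2"
        by (rule power_mono[OF _ norm_ge_zero])
    qed
    also have "\<dots> = ?th ^ 2 * (\<Sum>b\<in>B. cmod (cinner b y) ^ 2)"
      by (simp only: power_mult_distrib sum_distrib_left)
    also have "(\<Sum>b\<in>B. cmod (cinner b y) ^ 2) = norm y ^ 2"
      using parseval[OF oB fB, of "\<lambda>b. cinner b y"] expand by metis
    also have "norm y = norm x" by (simp add: y_def norm_cv)
    finally have "norm (L *v x) ^ 2 \<le> (?th * norm x) ^ 2" by (simp only: power_mult_distrib)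
    then show "norm (L *v x) \<le> ?th * norm x"
      using th0 by (meson power2_le_imp_le norm_ge_zero mult_nonneg_nonneg)
  qed
  then show ?thesis by (simp only: spec_norm_def)
qed

end

context orth_small
begin

lemma unique:
  assumes eX: "mat_exp X = V" and sX: "\<forall>l. cplx_eigenvalue X l \<longrightarrow> - pi < Im l \<and> Im l < pi"
  shows "X = L"
proof -
  have c1: "X ** V = V ** X" using mat_exp_self_commute[of X] eX by simp
  have c2: "L ** V = V ** L" using mat_exp_self_commute[of L] exp_L by simp
  have c3: "L ** X = X ** L"
  proof -
    have "cm L ** cm X = cm X ** cm L"
    proof (rule eq_on_basis[OF expand], intro ballI)
      fix b assume b: "b \<in> B"
      define w where "w = cm X *v b"
      have "cm V *v w = cm X *v (cm V *v b)"
        unfolding w_def by (simp add: matrix_vector_mul_assoc flip: cm_mult c1)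
      then have "cm V *v w = ev b *s w" by (simp add: ev[OF b] mv_smult w_def)
      then have "cm L *v w = Ln (ev b) *s w" unfolding cm_L by (rule KP)
      moreover have "cm X *v (cm L *v b) = Ln (ev b) *s w"
        by (simp add: cm_L Lc_b[OF b] mv_smult w_def)
      ultimately show "(cm L ** cm X) *v b = (cm X ** cm L) *v b"
        by (simp add: w_def flip: matrix_vector_mul_assoc)
    qed
    then show ?thesis by (simp flip: cm_mult) (rule cm_inj)
  qed
  define Y where "Y = X - L"
  have "mat_exp (X + - L) = mat_exp X ** mat_exp (- L)"
    by (rule mat_exp_add) (simp add: mm_neg_l mm_neg_r c3)
  then have eY1: "mat_exp Y = V ** mat_exp (- L)" by (simp add: Y_def eX)
  have "mat_exp (- L) ** V = mat 1" using mat_exp_minus[of L] exp_L by simp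
  moreover have "V ** transpose V = mat 1" using orth by (simp add: orthogonal_matrix_def)
  ultimately have "mat_exp (- L) = transpose V"
    by (metis matrix_mul_assoc matrix_mul_lid matrix_mul_rid)
  then have eY: "mat_exp Y = mat 1" using eY1 orth by (simp add: orthogonal_matrix_def)
  define P where "P = phi_m Y"
  have YP: "Y ** P = 0" unfolding P_def phi_m_prop eY by simp
  have PY: "Y ** P = P ** Y" unfolding P_def by (rule phi_m_commute) simp
  have XY: "X ** Y = Y ** X" by (simp add: Y_def mm_diff_l mm_diff_r c3)
  have VY: "V ** Y = Y ** V" by (simp add: Y_def mm_diff_l mm_diff_r c1 c2)
  have XP: "X ** P = P ** X" unfolding P_def by (rule phi_m_commute[OF XY])
  have VP: "V ** P = P ** V" unfolding P_def by (rule phi_m_commute[OF VY])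
  have Pinj: "w = 0" if w: "cm P *v w = 0" for w
  proof (rule ccontr)
    assume wnz: "w \<noteq> 0"
    let ?S1 = "{w. cm P *v w = 0}"
    have sub1: "vec.subspace ?S1" by (auto simp: vec.subspace_def mv_smult matrix_vector_right_distrib)
    have inv1: "\<forall>w\<in>?S1. cm V *v w \<in> ?S1"
    proof (intro ballI, simp)
      fix w assume w: "cm P *v w = 0"
      have "cm P *v (cm V *v w) = cm V *v (cm P *v w)"
        by (simp add: matrix_vector_mul_assoc flip: cm_mult VP)
      then show "cm P *v (cm V *v w) = 0" using w by simp
    qed
    obtain u1 m where u1: "u1 \<in> ?S1" "u1 \<noteq> 0" "cm V *v u1 = m *s u1"
      using eig_in_subspace[OF sub1 inv1, of w] w wnz by auto
    let ?S2 = "{w. cm P *v w = 0 \<and> cm V *v w = m *s w}"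
    have sub2: "vec.subspace ?S2"
      by (auto simp: vec.subspace_def mv_smult matrix_vector_right_distrib vec_eq_iff algebra_simps)
    have inv2: "\<forall>w\<in>?S2. cm X *v w \<in> ?S2"
    proof (intro ballI, simp, intro conjI)
      fix w assume w: "cm P *v w = 0 \<and> cm V *v w = m *s w"
      have "cm P *v (cm X *v w) = cm X *v (cm P *v w)"
        by (simp add: matrix_vector_mul_assoc flip: cm_mult XP)
      then show "cm P *v (cm X *v w) = 0" using w by simp
      have "cm V *v (cm X *v w) = cm X *v (cm V *v w)"
        by (simp add: matrix_vector_mul_assoc flip: cm_mult c1)
      then show "cm V *v (cm X *v w) = m *s (cm X *v w)" using w by (simp add: mv_smult)
    qed
    obtain u l where u: "u \<in> ?S2" "u \<noteq> 0" "cm X *v u = l *s u"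
      using eig_in_subspace[OF sub2 inv2, of u1] u1 by auto
    have lstrip: "\<bar>Im l\<bar> < pi" using sX u(2,3) unfolding cplx_eigenvalue_def by fastforce
    have um: "cm V *v u = m *s u" using u(1) by simp
    note p = eig_props[OF um u(2)]
    have Lu: "cm L *v u = Ln m *s u" unfolding cm_L by (rule KP[OF um])
    define z where "z = l - Ln m"
    have Yu: "cm Y *v u = z *s u"
      by (simp add: Y_def z_def cm_diff matrix_vector_mult_diff_rdistrib u(3) Lu vec_eq_iff algebra_simps)
    have "cm P *v u = phi_rm z *s u" unfolding P_def by (rule phi_eig[OF Yu])
    then have "phi_rm z = 0" using u(1,2) smult_eq_0 by auto
    then have "exp z = 1" using phi_rm_prop[of z] by simp
    then obtain n :: int where n: "Im z = of_int (2 * n) * pi" by (auto simp: exp_eq_1)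
    have "Im z = Im l - Im (Ln m)" by (simp add: z_def)
    moreover have "\<bar>Im l - Im (Ln m)\<bar> \<le> \<bar>Im l\<bar> + \<bar>Im (Ln m)\<bar>" by (rule abs_triangle_ineq4)
    ultimately have "\<bar>Im z\<bar> < 3 * pi / 2" using lstrip p(6) by linarith
    then have "\<bar>of_int (2 * n) * pi\<bar> < 3 * pi / 2" using n by simp
    then have "\<bar>real_of_int (2 * n)\<bar> * pi < 3 / 2 * pi" by (simp add: abs_mult)
    then have "\<bar>real_of_int (2 * n)\<bar> < 3 / 2" using pi_gt_zero mult_less_cancel_right_pos by blast
    then have "n = 0" by linarith
    moreover have "Re z = 0" using \<open>exp z = 1\<close> exp_eq_1 by blast
    ultimately have "z = 0" using n by (simp add: complex_eq_iff)
    then show False using \<open>phi_rm z = 0\<close> phi_rm_0[where 'a=complex] by simp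
  qed
  have "cm Y = cm 0"
  proof (rule iffD2[OF matrix_eq], rule allI)
    fix w
    have "cm P *v (cm Y *v w) = cm (Y ** P) *v w"
      by (simp add: PY matrix_vector_mul_assoc cm_mult)
    then have "cm Y *v w = 0" using Pinj YP by (simp add: cm_zero)
    then show "cm Y *v w = cm 0 *v w" by (simp add: cm_zero)
  qed
  then have "Y = 0" by (rule cm_inj)
  then show ?thesis by (simp add: Y_def)
qed

end

lemma main_log:
  fixes V :: "real^'n^'n"
  assumes V: "orthogonal_matrix V" and s: "spec_norm (V - mat 1) < 1"
  shows "spec_norm (principal_log V) \<le> 2 * arcsin (spec_norm (V - mat 1) / 2)"
proof -
  obtain B where B: "eigB V B" "\<forall>x. x = (\<Sum>b\<in>B. cinner b x *s b)"
    using eigbasis_exists[OF V] by blast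
  interpret orth_small V B using V s B by unfold_locales
  have "principal_log V = L"
    unfolding principal_log_def
  proof (rule the_equality)
    show "mat_exp L = V \<and> (\<forall>l. cplx_eigenvalue L l \<longrightarrow> - pi < Im l \<and> Im l < pi)"
    proof (intro conjI allI impI)
      show "mat_exp L = V" by (rule exp_L)
      fix l assume "cplx_eigenvalue L l"
      then have "\<bar>Im l\<bar> < pi/2" by (rule L_eig)
      then show "- pi < Im l" "Im l < pi" using pi_gt_zero by linarith+
    qed
    fix X assume "mat_exp X = V \<and> (\<forall>l. cplx_eigenvalue X l \<longrightarrow> - pi < Im l \<and> Im l < pi)"
    then show "X = L" using unique by blast
  qed
  then show ?thesis using L_norm by simp
qed

theorem propositionB2:
  fixes V :: "real^'n^'n" and r :: real
  assumes "orthogonal_matrix V"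
    and "spec_norm (V - mat 1) < r"
    and "r < 1"
  shows "spec_norm (principal_log V) < r * sqrt (1 - r^2 / 4) / (1 - r^2 / 2)"
proof -
  have s0: "0 \<le> spec_norm (V - mat 1)" unfolding spec_norm_def by (rule onorm_pos_le) simp
  have s1: "spec_norm (V - mat 1) < 1" using assms by linarith
  have "spec_norm (principal_log V) \<le> 2 * arcsin (spec_norm (V - mat 1) / 2)"
    by (rule main_log[OF assms(1) s1])
  also have "\<dots> < r * sqrt (1 - r^2 / 4) / (1 - r^2 / 2)"
    by (rule final_trig[OF s0 assms(2,3)])
  finally show ?thesis .
qed

end
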